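(* Let $\mathcal{D}$ be a finite domain of search histories with $|\mathcal{D}|\ge 2$ and $U\ge 1$. Algorithm $\hat{\mathcal{A}}$ is $(\epsilon',1/(|\mathcal{D}|-1))$-indistinguishable for all $\epsilon'>0$, but it is not $(\epsilon,\delta)$-probabilistic differentially private for any $\epsilon$ and any $\delta<1$.
   Context: A search log is an element $S=(S_1,\dots,S_U)\in\mathcal{D}^U$, where $S_i$ is user $i$'s search history; two search logs are neighboring if they differ in exactly one user's history. Algorithm $\hat{\mathcal{A}}$, on input $S$, samples uniformly at random an element of $\mathcal{D}\setminus\{S_1\}$ and returns it. An algorithm $\mathcal{A}$ with output space $\Omega$ is $(\epsilon,\delta)$-indistinguishable if for all neighboring $S,S'$ and all $\mathcal{O}\subseteq\Omega$: $\Pr[\mathcal{A}(S)\in\mathcal{O}]\le e^{\epsilon}\Pr[\mathcal{A}(S')\in\mathcal{O}]+\delta$. $\mathcal{A}$ is $(\epsilon,\delta)$-probabilistic differentially private if for every search log $S$ the output space $\Omega$ can be partitioned into $\Omega_1,\Omega_2$ with (1) $\Pr[\mathcal{A}(S)\in\Omega_2]\le\delta$ and (2) for all neighboring $S'$ and all $O\in\Omega_1$: $e^{-\epsilon}\Pr[\mathcal{A}(S')=O]\le\Pr[\mathcal{A}(S)=O]\le e^{\epsilon}\Pr[\mathcal{A}(S')=O]$. *)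

theory Defs
  imports "HOL-Probability.Probability"
begin

text \<open>A search log over the domain 'd with U users is a list of length U;
  user i's history is the i-th entry (user 1 = index 0).\<close>

definition search_logs :: "nat \<Rightarrow> 'd list set" where
  "search_logs U = {S. length S = U}"

definition neighboring :: "nat \<Rightarrow> 'd list \<Rightarrow> 'd list \<Rightarrow> bool" where
  "neighboring U S S' \<longleftrightarrow> length S = U \<and> length S' = U \<and>
     card {i. i < U \<and> S ! i \<noteq> S' ! i} = 1"

definition indistinguishable :: "nat \<Rightarrow> ('d list \<Rightarrow> 'o pmf) \<Rightarrow> real \<Rightarrow> real \<Rightarrow> bool" where
  "indistinguishable U A \<epsilon> \<delta> \<longleftrightarrow>
     (\<forall>S S'. neighboring U S S' \<longrightarrow>
        (\<forall>\<O> :: 'o set. measure_pmf.prob (A S) \<O> \<le> exp \<epsilon> * measure_pmf.prob (A S') \<O> + \<delta>))"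

definition prob_dp :: "nat \<Rightarrow> ('d list \<Rightarrow> 'o pmf) \<Rightarrow> real \<Rightarrow> real \<Rightarrow> bool" where
  "prob_dp U A \<epsilon> \<delta> \<longleftrightarrow>
     (\<forall>S \<in> search_logs U. \<exists>\<Omega>1 \<Omega>2 :: 'o set.
        \<Omega>1 \<union> \<Omega>2 = UNIV \<and> \<Omega>1 \<inter> \<Omega>2 = {} \<and>
        measure_pmf.prob (A S) \<Omega>2 \<le> \<delta> \<and>
        (\<forall>S'. neighboring U S S' \<longrightarrow> (\<forall>x \<in> \<Omega>1.
            exp (-\<epsilon>) * pmf (A S') x \<le> pmf (A S) x \<and>
            pmf (A S) x \<le> exp \<epsilon> * pmf (A S') x)))"

definition A_hat :: "'d::finite list \<Rightarrow> 'd pmf" where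
  "A_hat S = pmf_of_set (UNIV - {hd S})"

end

theory Submission
  imports Defs
begin

lemma card_minus_one: "card (UNIV - {a::'d::finite}) = CARD('d) - 1"
  by (simp add: card_Diff_subset)

lemma prob_Ahat:
  assumes "CARD('d::finite) \<ge> 2"
  shows "measure_pmf.prob (A_hat (S::'d list)) X =
    real (card (X \<inter> (UNIV - {hd S}))) / (real CARD('d) - 1)"
proof -
  have ne: "UNIV - {hd S} \<noteq> {}"
  proof
    assume "UNIV - {hd S} = {}"
    hence "(UNIV::'d set) \<subseteq> {hd S}" by blast
    hence "CARD('d) \<le> 1" using card_mono[of "{hd S}" UNIV] by auto
    with assms show False by simp
  qed
  have "measure_pmf.prob (A_hat S) X = real (card (X \<inter> (UNIV - {hd S}))) / real (card (UNIV - {hd S}))"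
    unfolding A_hat_def using measure_pmf_of_set[OF ne, of X] by (simp add: Int_commute)
  also have "real (card (UNIV - {hd S})) = real CARD('d) - 1"
    using assms by (simp add: card_minus_one of_nat_diff)
  finally show ?thesis .
qed

theorem corollary13:
  fixes U :: nat
  assumes "CARD('d::finite) \<ge> 2" and "U \<ge> 1"
  shows "(\<forall>\<epsilon>'>0. indistinguishable U (A_hat :: 'd list \<Rightarrow> 'd pmf) \<epsilon>' (1 / (real CARD('d) - 1)))
       \<and> (\<forall>\<epsilon> \<delta>. \<delta> < 1 \<longrightarrow> \<not> prob_dp U (A_hat :: 'd list \<Rightarrow> 'd pmf) \<epsilon> \<delta>)"
proof (intro conjI allI impI)
  have npos: "real CARD('d) - 1 > 0" using assms(1) by simp
  fix e :: real assume "e > 0"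
  show "indistinguishable U (A_hat :: 'd list \<Rightarrow> 'd pmf) e (1 / (real CARD('d) - 1))"
    unfolding indistinguishable_def
  proof (intro allI impI)
    fix S S' :: "'d list" and X :: "'d set"
    have sub: "X \<inter> (UNIV - {hd S}) \<subseteq> insert (hd S') (X \<inter> (UNIV - {hd S'}))" by blast
    have "card (X \<inter> (UNIV - {hd S})) \<le> card (insert (hd S') (X \<inter> (UNIV - {hd S'})))"
      by (rule card_mono[OF _ sub]) simp
    also have "\<dots> \<le> card (X \<inter> (UNIV - {hd S'})) + 1" by (simp add: card_insert_if)
    finally have c: "real (card (X \<inter> (UNIV - {hd S}))) \<le> real (card (X \<inter> (UNIV - {hd S'}))) + 1"
      by linarith
    have p: "measure_pmf.prob (A_hat S) X \<le> measure_pmf.prob (A_hat S') X + 1 / (real CARD('d) - 1)"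
      unfolding prob_Ahat[OF assms(1)] using c npos
      by (simp add: add_divide_distrib[symmetric] divide_right_mono)
    have "measure_pmf.prob (A_hat S') X \<le> exp e * measure_pmf.prob (A_hat S') X"
      using \<open>e > 0\<close> by (simp add: mult_le_cancel_right1)
    with p show "measure_pmf.prob (A_hat S) X \<le> exp e * measure_pmf.prob (A_hat S') X + 1 / (real CARD('d) - 1)"
      by linarith
  qed
next
  fix e d :: real assume "d < 1"
  show "\<not> prob_dp U (A_hat :: 'd list \<Rightarrow> 'd pmf) e d"
  proof
    assume dp: "prob_dp U (A_hat :: 'd list \<Rightarrow> 'd pmf) e d"
    obtain a :: 'd where True by blast
    define S where "S = replicate U a"
    have hdS: "hd S = a" using assms(2) unfolding S_def by (cases U) auto
    have "S \<in> search_logs U" unfolding S_def search_logs_def by simp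
    then have "\<exists>Om1 Om2 :: 'd set.
        Om1 \<union> Om2 = UNIV \<and> Om1 \<inter> Om2 = {} \<and>
        measure_pmf.prob (A_hat S) Om2 \<le> d \<and>
        (\<forall>S'. neighboring U S S' \<longrightarrow> (\<forall>x \<in> Om1.
            exp (-e) * pmf (A_hat S') x \<le> pmf (A_hat S) x \<and>
            pmf (A_hat S) x \<le> exp e * pmf (A_hat S') x))"
      using dp unfolding prob_dp_def by (rule bspec[rotated])
    then obtain Om1 Om2 :: "'d set" where
      un: "Om1 \<union> Om2 = UNIV" and pr: "measure_pmf.prob (A_hat S) Om2 \<le> d" and
      nb0: "\<forall>S'. neighboring U S S' \<longrightarrow> (\<forall>x \<in> Om1.
            exp (-e) * pmf (A_hat S') x \<le> pmf (A_hat S) x \<and>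
            pmf (A_hat S) x \<le> exp e * pmf (A_hat S') x)"
      by (elim exE conjE)
    note nb = nb0[rule_format]
    have ne: "UNIV - {x} \<noteq> {}" for x :: 'd
    proof
      assume "UNIV - {x} = {}"
      hence "(UNIV::'d set) \<subseteq> {x}" by blast
      hence "CARD('d) \<le> 1" using card_mono[of "{x}" UNIV] by auto
      with assms show False by simp
    qed
    have "UNIV - {a} \<subseteq> Om2"
    proof
      fix b assume b: "b \<in> UNIV - {a}"
      show "b \<in> Om2"
      proof (rule ccontr)
        assume "b \<notin> Om2"
        hence bO1: "b \<in> Om1" using un by blast
        define S' where "S' = S[0 := b]"
        have set: "{i. i < U \<and> S ! i \<noteq> S' ! i} = {0}"
          using assms(2) b unfolding S'_def S_def by (auto simp: nth_list_update)
        have "neighboring U S S'"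
          unfolding neighboring_def using set by (simp add: S'_def S_def)
        have hdS': "hd S' = b" using assms(2) unfolding S'_def S_def by (cases U) auto
        have "pmf (A_hat S) b \<le> exp e * pmf (A_hat S') b"
          using nb[OF \<open>neighboring U S S'\<close> bO1] by simp
        moreover have "pmf (A_hat S') b = 0" unfolding A_hat_def hdS' using pmf_of_set[OF ne[of b], of b] by simp
        moreover have "pmf (A_hat S) b > 0" unfolding A_hat_def hdS using b pmf_of_set[OF ne[of a], of b] assms(1)
          by simp
        ultimately show False by simp
      qed
    qed
    hence "measure_pmf.prob (A_hat S) (UNIV - {a}) \<le> measure_pmf.prob (A_hat S) Om2"
      by (intro measure_pmf.finite_measure_mono) auto
    moreover have "measure_pmf.prob (A_hat S) (UNIV - {a}) = 1"
      unfolding A_hat_def hdS using measure_pmf_of_set[OF ne[of a], of "UNIV - {a}"] ne[of a] assms(1)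
      by (simp add: card_gt_0_iff)
    ultimately show False using pr \<open>d < 1\<close> by simp
  qed
qed

end
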